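(* Let $G$ be a group of finite order $n$ whose Sylow $2$-subgroups are non-trivial and cyclic. Then the Cayley table of $G$ contains no $k$-plex for any odd $k$, but the Cayley table has a $2$-partition, and hence contains a $k$-plex for every even $k$ with $0\le k\le n$.
   Context: The Cayley table of a finite group $G$ is the latin square with rows and columns indexed by the elements of $G$ whose entry in row $x$, column $y$ is $xy$. A $k$-plex in a latin square of order $n$ is a set of $kn$ cells containing exactly $k$ cells from each row, exactly $k$ cells from each column, and exactly $k$ occurrences of each symbol. A $2$-partition of a latin square is a partition of its set of cells into pairwise disjoint $2$-plexes. *)

theory Defs
  imports "HOL-Algebra.Algebra" "HOL-Computational_Algebra.Primes"
begin

definition sylow_subgroup :: "('a, 'b) monoid_scheme \<Rightarrow> nat \<Rightarrow> 'a set \<Rightarrow> bool" where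
  "sylow_subgroup G p P \<longleftrightarrow> subgroup P G \<and> card P = p ^ multiplicity p (order G)"

text \<open>Cells of the Cayley table of G: pairs (row x, column y); the symbol of cell (x,y) is x*y.\<close>
definition cayley_cells :: "('a, 'b) monoid_scheme \<Rightarrow> ('a \<times> 'a) set" where
  "cayley_cells G = carrier G \<times> carrier G"

definition cayley_kplex :: "('a, 'b) monoid_scheme \<Rightarrow> nat \<Rightarrow> ('a \<times> 'a) set \<Rightarrow> bool" where
  "cayley_kplex G k P \<longleftrightarrow>
     P \<subseteq> cayley_cells G \<and> card P = k * order G \<and>
     (\<forall>x \<in> carrier G. card {c \<in> P. fst c = x} = k) \<and>
     (\<forall>y \<in> carrier G. card {c \<in> P. snd c = y} = k) \<and>
     (\<forall>s \<in> carrier G. card {c \<in> P. fst c \<otimes>\<^bsub>G\<^esub> snd c = s} = k)"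

definition cayley_2partition :: "('a, 'b) monoid_scheme \<Rightarrow> ('a \<times> 'a) set set \<Rightarrow> bool" where
  "cayley_2partition G Q \<longleftrightarrow>
     (\<forall>P \<in> Q. cayley_kplex G 2 P) \<and>
     (\<forall>P \<in> Q. \<forall>P' \<in> Q. P \<noteq> P' \<longrightarrow> P \<inter> P' = {}) \<and>
     \<Union>Q = cayley_cells G"

end

theory Submission
  imports Defs
begin


lemma funpow_in: "f ` T \<subseteq> T \<Longrightarrow> t \<in> T \<Longrightarrow> (f ^^ k) t \<in> T"
  by (induction k) auto

lemma funpow_inj: "f ` T \<subseteq> T \<Longrightarrow> inj_on f T \<Longrightarrow> x \<in> T \<Longrightarrow> y \<in> T \<Longrightarrow> (f ^^ k) x = (f ^^ k) y \<Longrightarrow> x = y"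
proof (induction k arbitrary: x y)
  case 0 then show ?case by simp
next
  case (Suc k)
  have "(f ^^ k) (f x) = (f ^^ k) (f y)" using Suc.prems by (simp add: funpow_Suc_right del: funpow.simps)
  then have "f x = f y" using Suc by blast
  then show ?case using Suc.prems by (meson inj_onD)
qed

lemma funpow_mult_period: "(f ^^ r) t = t \<Longrightarrow> (f ^^ (r * c)) t = t"
  by (induction c) (auto simp: funpow_add)

lemma orbit_parity:
  fixes \<pi> :: "'a \<Rightarrow> 'a" and e :: "'a \<Rightarrow> nat"
  assumes "finite T" "\<pi> ` T \<subseteq> T" "inj_on \<pi> T" "\<forall>t\<in>T. (\<pi>^^m) t = t" "m = 2^a"
    and fixh: "\<forall>t\<in>T. \<pi> t = t \<longrightarrow> odd (e t)"
    and nonfix: "\<forall>t\<in>T. \<forall>r. 1 < r \<longrightarrow> r dvd m \<longrightarrow> (\<pi>^^r) t = t \<longrightarrow> even (\<Sum>k<r. e ((\<pi>^^k) t))"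
  shows "even (\<Sum>t\<in>T. e t) = even (card T)"
  using assms(1-4) fixh nonfix
proof (induction "card T" arbitrary: T rule: less_induct)
  case less
  show ?case
  proof (cases "T = {}")
    case True then show ?thesis by simp
  next
    case False
    then obtain t where tT: "t \<in> T" by blast
    have mpos: "0 < m" using assms(5) by simp
    define r where "r = (LEAST r. 0 < r \<and> (\<pi>^^r) t = t)"
    have ex: "0 < m \<and> (\<pi>^^m) t = t" using less.prems(4) tT mpos by auto
    have r: "0 < r" "(\<pi>^^r) t = t" unfolding r_def using LeastI[of "\<lambda>r. 0 < r \<and> (\<pi>^^r) t = t", OF ex] by auto
    have rmin: "\<And>j. 0 < j \<Longrightarrow> j < r \<Longrightarrow> (\<pi>^^j) t \<noteq> t" unfolding r_def using not_less_Least by blast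
    have rdvd: "r dvd m"
    proof (rule ccontr)
      assume nd: "\<not> r dvd m"
      have "(\<pi>^^m) t = (\<pi>^^(m mod r)) ((\<pi>^^(r * (m div r))) t)"
      proof -
        have "m = m mod r + r * (m div r)" by simp
        then show ?thesis by (metis funpow_add o_apply)
      qed
      then have "(\<pi>^^(m mod r)) t = t" using ex funpow_mult_period[OF r(2)] by simp
      moreover have "0 < m mod r" using nd by (simp add: dvd_eq_mod_eq_0)
      moreover have "m mod r < r" using r(1) by simp
      ultimately show False using rmin by blast
    qed
    define Ob where "Ob = (\<lambda>k. (\<pi>^^k) t) ` {..<r}"
    have ObT: "Ob \<subseteq> T" unfolding Ob_def using funpow_in[OF less.prems(2) tT] by auto
    have injOb: "inj_on (\<lambda>k. (\<pi>^^k) t) {..<r}"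
    proof (rule inj_onI, rule ccontr)
      fix i j assume ij: "i \<in> {..<r}" "j \<in> {..<r}" "(\<pi>^^i) t = (\<pi>^^j) t" "i \<noteq> j"
      have key: "\<And>i j. i < j \<Longrightarrow> j < r \<Longrightarrow> (\<pi>^^i) t = (\<pi>^^j) t \<Longrightarrow> False"
      proof -
        fix i j assume a: "i < j" "j < r" "(\<pi>^^i) t = (\<pi>^^j) t"
        have "(\<pi>^^i) t = (\<pi>^^i) ((\<pi>^^(j-i)) t)" proof -
          have "j = i + (j - i)" using a by simp
          then show ?thesis using a(3) by (metis funpow_add o_apply)
        qed
        then have "t = (\<pi>^^(j-i)) t" using funpow_inj[OF less.prems(2) less.prems(3) tT funpow_in[OF less.prems(2) tT]] by blast
        then show False using rmin[of "j-i"] a proof -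
          have "0 < j - i" "j - i < r" using a by auto
          then show False using rmin \<open>t = _\<close> by metis
        qed
      qed
      show False using ij key[of i j] key[of j i] by (cases "i < j") auto
    qed
    have cardOb: "card Ob = r" unfolding Ob_def using injOb by (simp add: card_image)
    have tOb: "t \<in> Ob" unfolding Ob_def using r(1) by force
    have sumOb: "(\<Sum>x\<in>Ob. e x) = (\<Sum>k<r. e ((\<pi>^^k) t))" unfolding Ob_def using injOb by (simp add: sum.reindex)
    have inv: "\<pi> ` (T - Ob) \<subseteq> T - Ob"
    proof
      fix y assume "y \<in> \<pi> ` (T - Ob)"
      then obtain x where x: "x \<in> T" "x \<notin> Ob" "y = \<pi> x" by blast
      have "y \<in> T" using x less.prems(2) by blast
      moreover have "y \<notin> Ob"
      proof
        assume "y \<in> Ob"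
        then obtain k where k: "k < r" "y = (\<pi>^^k) t" unfolding Ob_def by blast
        define k' where "k' = (if k = 0 then r - 1 else k - 1)"
        have "k' < r" unfolding k'_def using k r by auto
        have "\<pi> ((\<pi>^^k') t) = (\<pi>^^k) t"
        proof (cases "k = 0")
          case True
          then have "Suc k' = r" unfolding k'_def using r by simp
          then have "\<pi> ((\<pi>^^k') t) = (\<pi>^^r) t" by (metis funpow.simps(2) o_apply)
          then show ?thesis using r True by simp
        next
          case False
          then have "Suc k' = k" unfolding k'_def by simp
          then show ?thesis by (metis funpow.simps(2) o_apply)
        qed
        then have "\<pi> ((\<pi>^^k') t) = \<pi> x" using k x by simp
        then have "x = (\<pi>^^k') t" using less.prems(3) x(1) funpow_in[OF less.prems(2) tT] by (simp add: inj_on_def)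
        then show False using x(2) \<open>k' < r\<close> unfolding Ob_def by blast
      qed
      ultimately show "y \<in> T - Ob" by blast
    qed
    have c1: "card (T - Ob) < card T"
    proof -
      have "0 < card Ob" using tOb ObT less.prems(1) card_gt_0_iff finite_subset by blast
      moreover have "card Ob \<le> card T" using ObT less.prems(1) card_mono by blast
      ultimately show ?thesis using ObT less.prems(1) by (simp add: card_Diff_subset finite_subset)
    qed
    have f1: "finite (T - Ob)" using less.prems(1) by simp
    have i1: "inj_on \<pi> (T - Ob)" using less.prems(3) by (rule inj_on_subset) auto
    have h4: "\<forall>t\<in>T - Ob. (\<pi> ^^ m) t = t" using less.prems(4) by blast
    have h5: "\<forall>t\<in>T - Ob. \<pi> t = t \<longrightarrow> odd (e t)" using less.prems(5) by blast
    have h6: "\<forall>t\<in>T - Ob. \<forall>r. 1 < r \<longrightarrow> r dvd m \<longrightarrow> (\<pi> ^^ r) t = t \<longrightarrow> even (\<Sum>k<r. e ((\<pi> ^^ k) t))" using less.prems(6) by blast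
    have IH: "even (sum e (T - Ob)) = even (card (T - Ob))"
      using less.hyps[OF c1 f1 inv i1 h4 h5 h6] .
    have split1: "sum e T = sum e Ob + sum e (T - Ob)"
      using less.prems(1) ObT by (simp add: sum.subset_diff)
    have split2: "card T = card Ob + card (T - Ob)"
      using less.prems(1) ObT by (simp add: card_Diff_subset card_mono finite_subset)
    have parOb: "even (sum e Ob) = even (card Ob)"
    proof (cases "r = 1")
      case True
      then have "Ob = {t}" unfolding Ob_def by auto
      moreover have "\<pi> t = t" using r True by simp
      ultimately show ?thesis using less.prems(5) tT by simp
    next
      case False
      then have r1: "1 < r" using r by simp
      have "even (sum e Ob)" using sumOb less.prems(6) tT r1 rdvd r(2) by metis
      moreover have "even r"
      proof -
        have "r dvd 2^a" using rdvd assms(5) by simp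
        then obtain i where "i \<le> a" "r = 2^i" using divides_primepow_nat[of 2 r a] by auto
        then show ?thesis using r1 by (cases i) auto
      qed
      ultimately show ?thesis using cardOb by simp
    qed
    show ?thesis using split1 split2 parOb IH by simp
  qed
qed


locale tr = group G for G (structure) +
  fixes g m
  assumes g_in: "g \<in> carrier G" and ordg: "ord g = m" and finG: "finite (carrier G)"
begin

lemma m_pos: "0 < m" using ord_ge_1[OF finG g_in] ordg by simp

lemma gm: "g [^] m = \<one>" using ordg g_in pow_ord_eq_1 by blast

lemma gpow_mod: "g [^] (i::nat) = g [^] (i mod m)"
proof -
  have "g [^] i = g [^] (m * (i div m) + i mod m)" by simp
  also have "\<dots> = (g[^]m)[^](i div m) \<otimes> g[^](i mod m)" using g_in by (simp add: nat_pow_mult nat_pow_pow)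
  also have "\<dots> = g[^](i mod m)" using gm g_in by simp
  finally show ?thesis .
qed

lemma gpow_eq: "g [^] (i::nat) = g [^] (j::nat) \<longleftrightarrow> i mod m = j mod m"
proof
  assume "g [^] i = g [^] j"
  then have "g [^] int i = g [^] int j" by (simp add: int_pow_int)
  then have "int m dvd int j - int i" using int_pow_eq[OF g_in] ordg by simp
  then show "i mod m = j mod m" by (metis mod_eq_dvd_iff of_nat_eq_iff of_nat_mod)
next
  assume "i mod m = j mod m" then show "g [^] i = g [^] j" by (metis gpow_mod)
qed

lemma inv_gpow: "inv (g [^] (i::nat)) = g [^] (m - i mod m)"
proof -
  have "g [^] (m - i mod m) \<otimes> g [^] (i mod m) = g [^] (m - i mod m + i mod m)"
    using g_in by (simp add: nat_pow_mult)
  also have "m - i mod m + i mod m = m" using m_pos by (simp add: le_less)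
  finally have "g [^] (m - i mod m) \<otimes> g [^] i = \<one>" using gm gpow_mod by metis
  then show ?thesis using g_in by (metis inv_equality nat_pow_closed)
qed

definition cls where "cls y = {t \<in> carrier G. \<exists>i::nat. y = g [^] i \<otimes> t}"
definition R where "R y = (SOME t. t \<in> cls y)"
definition T where "T = R ` carrier G"
definition idx where "idx y = (SOME i. i < m \<and> y = g [^] i \<otimes> R y)"

lemma cls_refl: "y \<in> carrier G \<Longrightarrow> y \<in> cls y"
  unfolding cls_def by (rule CollectI, rule conjI, assumption, rule exI[of _ 0]) simp

lemma backw: assumes "y \<in> carrier G" "t \<in> carrier G" "y = g [^] (i::nat) \<otimes> t"
  shows "t = g [^] (m - i mod m) \<otimes> y"
proof -
  have "g [^] (m - i mod m) \<otimes> y = inv (g [^] i) \<otimes> (g [^] i \<otimes> t)" using assms inv_gpow by simp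
  also have "\<dots> = t" using assms g_in by (simp add: m_assoc[symmetric])
  finally show ?thesis by simp
qed

lemma cls_eq: assumes y: "y \<in> carrier G" and t: "t \<in> cls y" shows "cls t = cls y"
proof -
  from t obtain i where ti: "t \<in> carrier G" "y = g [^] (i::nat) \<otimes> t" unfolding cls_def by blast
  have ty: "t = g [^] (m - i mod m) \<otimes> y" using backw[OF y ti(1) ti(2)] .
  show ?thesis
  proof
    show "cls t \<subseteq> cls y"
    proof
      fix s assume "s \<in> cls t"
      then obtain j where s: "s \<in> carrier G" "t = g [^] (j::nat) \<otimes> s" unfolding cls_def by blast
      have "y = g [^] (i + j) \<otimes> s" using ti s g_in by (simp add: nat_pow_mult[symmetric] m_assoc)
      then show "s \<in> cls y" unfolding cls_def using s by blast
    qed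
    show "cls y \<subseteq> cls t"
    proof
      fix s assume "s \<in> cls y"
      then obtain j where s: "s \<in> carrier G" "y = g [^] (j::nat) \<otimes> s" unfolding cls_def by blast
      have "t = g [^] (m - i mod m + j) \<otimes> s" using ty s g_in by (simp add: nat_pow_mult[symmetric] m_assoc)
      then show "s \<in> cls t" unfolding cls_def using s by blast
    qed
  qed
qed

lemma R_cls: "y \<in> carrier G \<Longrightarrow> R y \<in> cls y"
  unfolding R_def using cls_refl by (metis someI)

lemma R_carrier: "y \<in> carrier G \<Longrightarrow> R y \<in> carrier G"
  using R_cls unfolding cls_def by blast

lemma R_R: "y \<in> carrier G \<Longrightarrow> R (R y) = R y"
  using cls_eq[OF _ R_cls] unfolding R_def by simp

lemma T_carrier: "T \<subseteq> carrier G" unfolding T_def using R_carrier by blast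
lemma finT: "finite T" using finG T_carrier finite_subset by blast
lemma R_T: "t \<in> T \<Longrightarrow> R t = t" unfolding T_def using R_R by blast
lemma R_in_T: "y \<in> carrier G \<Longrightarrow> R y \<in> T" unfolding T_def by blast

lemma idx: assumes "y \<in> carrier G" shows "idx y < m" "y = g [^] idx y \<otimes> R y"
proof -
  from R_cls[OF assms] obtain i where "y = g [^] (i::nat) \<otimes> R y" unfolding cls_def by blast
  then have "i mod m < m \<and> y = g [^] (i mod m) \<otimes> R y" using m_pos gpow_mod by simp
  then have "idx y < m \<and> y = g [^] idx y \<otimes> R y" unfolding idx_def by (rule someI)
  then show "idx y < m" "y = g [^] idx y \<otimes> R y" by auto
qed

lemma uniq: assumes y: "y \<in> carrier G" and t: "t \<in> T" and e: "y = g [^] (i::nat) \<otimes> t"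
  shows "R y = t" "idx y = i mod m"
proof -
  have tc: "t \<in> carrier G" using t T_carrier by blast
  have "t \<in> cls y" unfolding cls_def using tc e by blast
  then have "cls t = cls y" using cls_eq y by blast
  then have "R y = R t" unfolding R_def by simp
  then show Ry: "R y = t" using R_T t by simp
  have "g [^] idx y \<otimes> t = g [^] i \<otimes> t" using idx(2)[OF y] Ry e by simp
  then have "g [^] idx y = g [^] i" using tc g_in by (metis nat_pow_closed r_cancel_one' m_assoc r_inv inv_closed r_one)
  then show "idx y = i mod m" using gpow_eq idx(1)[OF y] by simp
qed


lemma idx_mult: assumes t: "t \<in> T" and x: "x \<in> carrier G" and y: "y \<in> carrier G"
  shows "idx (t \<otimes> x \<otimes> y) = (idx (t \<otimes> x) + idx (R (t \<otimes> x) \<otimes> y)) mod m"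
    "R (t \<otimes> x \<otimes> y) = R (R (t \<otimes> x) \<otimes> y)"
proof -
  have tc: "t \<in> carrier G" using t T_carrier by blast
  define s where "s = R (t \<otimes> x)"
  have sc: "s \<in> carrier G" unfolding s_def using R_carrier tc x by blast
  have e1: "t \<otimes> x = g [^] idx (t \<otimes> x) \<otimes> s" unfolding s_def using idx(2) tc x by blast
  have e2: "s \<otimes> y = g [^] idx (s \<otimes> y) \<otimes> R (s \<otimes> y)" using idx(2) sc y by blast
  have s'c: "R (s \<otimes> y) \<in> T" using R_in_T sc y by blast
  have "t \<otimes> x \<otimes> y = g [^] idx (t \<otimes> x) \<otimes> s \<otimes> y" using e1 by simp
  also have "\<dots> = g [^] idx (t \<otimes> x) \<otimes> (s \<otimes> y)" using sc y g_in by (simp add: m_assoc)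
  also have "\<dots> = g [^] (idx (t \<otimes> x) + idx (s \<otimes> y)) \<otimes> R (s \<otimes> y)"
    using e2 sc y g_in s'c T_carrier by (simp add: m_assoc nat_pow_mult[symmetric] subset_iff)
  finally have e3: "t \<otimes> x \<otimes> y = g [^] (idx (t \<otimes> x) + idx (s \<otimes> y)) \<otimes> R (s \<otimes> y)" .
  show "idx (t \<otimes> x \<otimes> y) = (idx (t \<otimes> x) + idx (R (t \<otimes> x) \<otimes> y)) mod m"
    using uniq(2)[OF _ s'c e3] tc x y unfolding s_def by simp
  show "R (t \<otimes> x \<otimes> y) = R (R (t \<otimes> x) \<otimes> y)"
    using uniq(1)[OF _ s'c e3] tc x y unfolding s_def by simp
qed

lemma perm_T: assumes x: "x \<in> carrier G" shows "bij_betw (\<lambda>t. R (t \<otimes> x)) T T"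
proof -
  have inj: "inj_on (\<lambda>t. R (t \<otimes> x)) T"
  proof (rule inj_onI)
    fix t t' assume t: "t \<in> T" and t': "t' \<in> T" and eq: "R (t \<otimes> x) = R (t' \<otimes> x)"
    have tc: "t \<in> carrier G" "t' \<in> carrier G" using t t' T_carrier by auto
    define s where "s = R (t \<otimes> x)"
    have sc: "s \<in> carrier G" unfolding s_def using R_carrier tc x by blast
    have e1: "t \<otimes> x = g [^] idx (t \<otimes> x) \<otimes> s" unfolding s_def using idx(2) tc x by blast
    have e2: "t' \<otimes> x = g [^] idx (t' \<otimes> x) \<otimes> s" unfolding s_def eq using idx(2) tc x by blast
    have e2': "s = g [^] (m - idx (t' \<otimes> x) mod m) \<otimes> (t' \<otimes> x)" using backw[OF _ sc e2] tc x by blast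
    have "t = t \<otimes> x \<otimes> inv x" using tc x by (simp add: m_assoc)
    also have "\<dots> = g [^] idx (t \<otimes> x) \<otimes> (g [^] (m - idx (t' \<otimes> x) mod m) \<otimes> (t' \<otimes> x)) \<otimes> inv x"
      using e1 e2' by simp
    also have "\<dots> = g [^] (idx (t \<otimes> x) + (m - idx (t' \<otimes> x) mod m)) \<otimes> t'"
      using tc x g_in by (simp add: m_assoc nat_pow_mult[symmetric])
    finally have "t = g [^] (idx (t \<otimes> x) + (m - idx (t' \<otimes> x) mod m)) \<otimes> t'" .
    then have "R t = t'" using uniq(1)[OF tc(1) t'] by blast
    then show "t = t'" using R_T t by simp
  qed
  have sub: "(\<lambda>t. R (t \<otimes> x)) ` T \<subseteq> T" using R_in_T T_carrier x by blast
  have "(\<lambda>t. R (t \<otimes> x)) ` T = T"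
    using inj sub finT by (metis card_image card_subset_eq)
  then show ?thesis using inj unfolding bij_betw_def by blast
qed

definition phi where "phi x = (\<Sum>t\<in>T. idx (t \<otimes> x)) mod m"

lemma phi_hom: assumes x: "x \<in> carrier G" and y: "y \<in> carrier G"
  shows "phi (x \<otimes> y) = (phi x + phi y) mod m"
proof -
  have "(\<Sum>t\<in>T. idx (t \<otimes> (x \<otimes> y))) mod m = (\<Sum>t\<in>T. (idx (t \<otimes> x) + idx (R (t \<otimes> x) \<otimes> y)) mod m) mod m"
    using idx_mult(1)[OF _ x y] T_carrier x y by (auto simp: m_assoc subset_iff intro!: arg_cong[where f="\<lambda>z. z mod m"] sum.cong)
  also have "\<dots> = (\<Sum>t\<in>T. idx (t \<otimes> x) + idx (R (t \<otimes> x) \<otimes> y)) mod m"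
    by (simp add: mod_sum_eq)
  also have "(\<Sum>t\<in>T. idx (t \<otimes> x) + idx (R (t \<otimes> x) \<otimes> y)) = (\<Sum>t\<in>T. idx (t \<otimes> x)) + (\<Sum>t\<in>T. idx (R (t \<otimes> x) \<otimes> y))"
    by (simp add: sum.distrib)
  also have "(\<Sum>t\<in>T. idx (R (t \<otimes> x) \<otimes> y)) = (\<Sum>t\<in>T. idx (t \<otimes> y))"
    using sum.reindex_bij_betw[OF perm_T[OF x], of "\<lambda>s. idx (s \<otimes> y)"] by simp
  finally show ?thesis unfolding phi_def by (simp add: mod_add_eq)
qed

lemma card_T: "order G = m * card T"
proof -
  have "bij_betw (\<lambda>(i, t). g [^] i \<otimes> t) ({..<m} \<times> T) (carrier G)"
  proof (rule bij_betwI')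
    fix a b assume "a \<in> {..<m} \<times> T" "b \<in> {..<m} \<times> T"
    then obtain i t j s where ab: "a = (i, t)" "b = (j, s)" "i < m" "j < m" "t \<in> T" "s \<in> T" by blast
    show "((\<lambda>(i, t). g [^] i \<otimes> t) a = (\<lambda>(i, t). g [^] i \<otimes> t) b) = (a = b)"
    proof
      assume "(\<lambda>(i, t). g [^] i \<otimes> t) a = (\<lambda>(i, t). g [^] i \<otimes> t) b"
      then have eq: "g [^] i \<otimes> t = g [^] j \<otimes> s" using ab by simp
      have c: "g [^] i \<otimes> t \<in> carrier G" using ab T_carrier g_in by blast
      have "R (g [^] i \<otimes> t) = t" "idx (g [^] i \<otimes> t) = i mod m" using uniq[OF c ab(5)] by auto
      moreover have "R (g [^] i \<otimes> t) = s" "idx (g [^] i \<otimes> t) = j mod m" using uniq[OF c ab(6)] eq by auto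
      ultimately show "a = b" using ab by simp
    qed simp
  next
    fix a assume "a \<in> {..<m} \<times> T"
    then show "(\<lambda>(i, t). g [^] i \<otimes> t) a \<in> carrier G" using T_carrier g_in by auto
  next
    fix y assume y: "y \<in> carrier G"
    show "\<exists>a\<in>{..<m} \<times> T. y = (\<lambda>(i, t). g [^] i \<otimes> t) a"
      using idx[OF y] R_in_T[OF y] by (intro bexI[of _ "(idx y, R y)"]) auto
  qed
  then have "card ({..<m} \<times> T) = card (carrier G)" by (rule bij_betw_same_card)
  then show ?thesis unfolding order_def by (simp add: card_cartesian_product)
qed

lemma pi_pow: assumes t: "t \<in> T"
  shows "((\<lambda>t. R (t \<otimes> g))^^k) t = R (t \<otimes> g [^] k) \<and>
    (\<Sum>j<k. idx (((\<lambda>t. R (t \<otimes> g))^^j) t \<otimes> g)) mod m = idx (t \<otimes> g [^] k)"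
proof (induction k)
  case 0
  have tc: "t \<in> carrier G" using t T_carrier by blast
  have "t = g [^] (0::nat) \<otimes> t" using tc by simp
  then have "idx t = 0 mod m" using uniq(2)[OF tc t] by blast
  then have "idx t = 0" by simp
  then show ?case using R_T[OF t] tc by simp
next
  case (Suc k)
  have tc: "t \<in> carrier G" using t T_carrier by blast
  have gk: "g [^] k \<in> carrier G" using g_in by simp
  have eq: "t \<otimes> g [^] Suc k = t \<otimes> g [^] k \<otimes> g" using tc g_in by (simp add: m_assoc)
  have A: "((\<lambda>t. R (t \<otimes> g))^^Suc k) t = R (t \<otimes> g [^] Suc k)"
    using Suc.IH idx_mult(2)[OF t gk g_in] eq by simp
  have ss: "(\<Sum>j<Suc k. idx (((\<lambda>t. R (t \<otimes> g))^^j) t \<otimes> g))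
      = (\<Sum>j<k. idx (((\<lambda>t. R (t \<otimes> g))^^j) t \<otimes> g)) + idx (R (t \<otimes> g [^] k) \<otimes> g)"
    using Suc.IH by simp
  have "(\<Sum>j<Suc k. idx (((\<lambda>t. R (t \<otimes> g))^^j) t \<otimes> g)) mod m
      = ((\<Sum>j<k. idx (((\<lambda>t. R (t \<otimes> g))^^j) t \<otimes> g)) mod m + idx (R (t \<otimes> g [^] k) \<otimes> g)) mod m"
    unfolding ss by (simp add: mod_add_left_eq)
  also have "\<dots> = idx (t \<otimes> g [^] Suc k)"
    using Suc.IH idx_mult(1)[OF t gk g_in] eq by simp
  finally show ?case using A by simp
qed

lemma conj_pow: assumes a: "a \<in> carrier G" and x: "x \<in> carrier G"
  shows "(a \<otimes> x \<otimes> inv a) [^] (k::nat) = a \<otimes> x [^] k \<otimes> inv a"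
proof (induction k)
  case 0 then show ?case using a by simp
next
  case (Suc k)
  have "(a \<otimes> x \<otimes> inv a) [^] Suc k = a \<otimes> x [^] k \<otimes> inv a \<otimes> (a \<otimes> x \<otimes> inv a)" using Suc by simp
  also have "\<dots> = a \<otimes> (x [^] k \<otimes> (inv a \<otimes> a) \<otimes> x) \<otimes> inv a" proof -
    have w: "\<And>w. w \<in> carrier G \<Longrightarrow> inv a \<otimes> (a \<otimes> w) = w" using a by (metis l_inv l_one m_assoc inv_closed)
    show ?thesis using a x w[of "x \<otimes> inv a"] by (simp add: m_assoc)
  qed
  also have "\<dots> = a \<otimes> (x [^] k \<otimes> x) \<otimes> inv a" using a x by simp
  finally show ?case by simp
qed

lemma fixed_odd: assumes t: "t \<in> T" and fx: "R (t \<otimes> g) = t" and me: "even m"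
  shows "odd (idx (t \<otimes> g))"
proof
  assume ev: "even (idx (t \<otimes> g))"
  then obtain u where u: "idx (t \<otimes> g) = 2 * u" by blast
  have tc: "t \<in> carrier G" using t T_carrier by blast
  have e1: "t \<otimes> g = g [^] (2 * u) \<otimes> t" using idx(2)[of "t \<otimes> g"] fx u tc g_in by simp
  have gu: "g [^] u \<in> carrier G" using g_in by simp
  define c where "c = inv t \<otimes> g [^] u \<otimes> inv (inv t)"
  have "g = inv t \<otimes> (t \<otimes> g)" using tc g_in by (simp add: m_assoc[symmetric])
  also have "\<dots> = inv t \<otimes> (g [^] u) [^] (2::nat) \<otimes> t" using e1 tc g_in by (simp add: m_assoc nat_pow_pow mult.commute)
  also have "\<dots> = c [^] (2::nat)" unfolding c_def using conj_pow[of "inv t" "g [^] u" 2] tc gu by simp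
  finally have gc: "g = c [^] (2::nat)" .
  have cc: "c \<in> carrier G" unfolding c_def using tc gu by simp
  have "g [^] (m div 2) = c [^] (2 * (m div 2))" using gc nat_pow_pow[OF cc, of 2 "m div 2"] by simp
  also have "2 * (m div 2) = m" using me by simp
  also have "c [^] m = inv t \<otimes> (g [^] u) [^] m \<otimes> t" unfolding c_def using conj_pow[of "inv t" "g [^] u" m] tc gu by simp
  also have "(g [^] u) [^] m = \<one>" using g_in gm by (simp add: nat_pow_pow mult.commute[of u m] nat_pow_pow[symmetric])
  finally have "g [^] (m div 2) = \<one>" using tc by simp
  then have "m dvd m div 2" using pow_eq_id[OF g_in] ordg by simp
  moreover have "0 < m div 2" "m div 2 < m" using m_pos me by auto
  ultimately show False by (simp add: nat_dvd_not_less)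
qed

lemma nonfixed_even: assumes t: "t \<in> T" and r1: "1 < r" and rd: "r dvd m" and fx: "R (t \<otimes> g [^] r) = t"
  and m2: "m = 2 ^ a"
  shows "even (idx (t \<otimes> g [^] r))"
proof -
  define S where "S = idx (t \<otimes> g [^] r)"
  have tc: "t \<in> carrier G" using t T_carrier by blast
  have gr: "g [^] r \<in> carrier G" using g_in by simp
  have e1: "t \<otimes> g [^] r = g [^] S \<otimes> t" using idx(2)[of "t \<otimes> g [^] r"] fx tc g_in unfolding S_def by simp
  have gS: "g [^] S = t \<otimes> g [^] r \<otimes> inv t" using e1 tc g_in by (simp add: m_assoc)
  have "(g [^] S) [^] (m div r) = t \<otimes> (g [^] r) [^] (m div r) \<otimes> inv t" using gS conj_pow[OF tc gr] by simp
  also have "(g [^] r) [^] (m div r) = g [^] m" using rd g_in by (simp add: nat_pow_pow)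
  finally have "g [^] (S * (m div r)) = \<one>" using gm tc g_in by (simp add: nat_pow_pow)
  then have "m dvd S * (m div r)" using pow_eq_id[OF g_in] ordg by simp
  then have "r * (m div r) dvd S * (m div r)" using rd by simp
  moreover have "0 < m div r" using rd m_pos r1 by (metis dvd_div_eq_0_iff gr0I not_gr0)
  ultimately have "r dvd S" by simp
  moreover have "even r"
  proof -
    have "r dvd 2^a" using rd m2 by simp
    then obtain i where "i \<le> a" "r = 2^i" using divides_primepow_nat[of 2 r a] by auto
    then show ?thesis using r1 by (cases i) auto
  qed
  ultimately show ?thesis unfolding S_def by auto
qed

lemma phi_g_odd: assumes m2: "m = 2 ^ a" and a1: "1 \<le> a" and oddT: "odd (card T)"
  shows "odd (phi g)"
proof -
  have me: "even m" using m2 a1 by (cases a) auto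
  define \<pi> where "\<pi> = (\<lambda>t. R (t \<otimes> g))"
  define e where "e = (\<lambda>t. idx (t \<otimes> g))"
  have modpar: "\<And>z. even (z mod m) = even z" using me by (metis dvd_mod_iff)
  have "even (\<Sum>t\<in>T. e t) = even (card T)"
  proof (rule orbit_parity[OF finT _ _ _ m2])
    show "\<pi> ` T \<subseteq> T" unfolding \<pi>_def using R_in_T T_carrier g_in by blast
    show "inj_on \<pi> T" unfolding \<pi>_def using perm_T[OF g_in] by (simp add: bij_betw_def)
    show "\<forall>t\<in>T. (\<pi>^^m) t = t" unfolding \<pi>_def using pi_pow gm R_T T_carrier by (auto simp: subset_iff)
    show "\<forall>t\<in>T. \<pi> t = t \<longrightarrow> odd (e t)" unfolding \<pi>_def e_def using fixed_odd me by blast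
    show "\<forall>t\<in>T. \<forall>r. 1 < r \<longrightarrow> r dvd m \<longrightarrow> (\<pi>^^r) t = t \<longrightarrow> even (\<Sum>k<r. e ((\<pi>^^k) t))"
    proof (intro ballI allI impI)
      fix t r assume t: "t \<in> T" and r: "1 < r" "r dvd m" "(\<pi>^^r) t = t"
      have P: "(\<pi>^^r) t = R (t \<otimes> g [^] r)" "(\<Sum>k<r. e ((\<pi>^^k) t)) mod m = idx (t \<otimes> g [^] r)"
        using pi_pow[OF t, of r] unfolding \<pi>_def e_def by auto
      have "even (idx (t \<otimes> g [^] r))" using nonfixed_even[OF t r(1) r(2) _ m2] P(1) r(3) by simp
      then show "even (\<Sum>k<r. e ((\<pi>^^k) t))" using P(2) modpar by metis
    qed
  qed
  then have "odd (\<Sum>t\<in>T. e t)" using oddT by simp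
  then show ?thesis unfolding phi_def e_def using modpar by simp
qed
end


lemma mod_dbl_zero: "(b::nat) < m \<Longrightarrow> (b + b) mod m = b \<Longrightarrow> b = 0"
proof (cases "b + b < m")
  case True
  assume "(b + b) mod m = b" then show ?thesis using True by simp
next
  case False
  assume a: "b < m" "(b + b) mod m = b"
  have "(b + b) mod m = (b + b - m) mod m" using False by (simp add: le_mod_geq)
  also have "\<dots> = b + b - m" using a(1) by simp
  finally show ?thesis using a by simp
qed

lemma mod_add_cancel_nat: assumes h: "((a::nat) + k) mod m = (b + k) mod m" shows "a mod m = b mod m"
proof -
  have "int ((a + k) mod m) = int ((b + k) mod m)" using h by simp
  then have "(int a + int k) mod int m = (int b + int k) mod int m" by (simp only: of_nat_mod of_nat_add)
  then have "int m dvd (int a + int k) - (int b + int k)" by (simp only: mod_eq_dvd_iff)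
  then have "int m dvd int a - int b" by simp
  then have "int a mod int m = int b mod int m" by (simp only: mod_eq_dvd_iff)
  then show ?thesis by (simp flip: of_nat_mod)
qed

lemma sum_lessThan_double: "2 * (\<Sum>i<(n::nat). i) = n * (n - 1)"
proof (induction n)
  case (Suc n)
  have "2 * (\<Sum>i<Suc n. i) = n * (n - 1) + 2 * n" using Suc by simp
  also have "\<dots> = Suc n * (Suc n - 1)" by (cases n) (simp_all add: algebra_simps)
  finally show ?case .
qed simp

lemma card_fibers: "finite A \<Longrightarrow> finite B \<Longrightarrow> f ` A \<subseteq> B \<Longrightarrow> card A = (\<Sum>y\<in>B. card {x\<in>A. f x = y})"
  using sum.group[of A B f "\<lambda>_. 1::nat"] by simp

locale hl = group G for G (structure) +
  fixes \<psi> :: "'a \<Rightarrow> nat" and g m q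
  assumes finG: "finite (carrier G)"
    and psi_lt: "x \<in> carrier G \<Longrightarrow> \<psi> x < m"
    and psi_mult: "x \<in> carrier G \<Longrightarrow> y \<in> carrier G \<Longrightarrow> \<psi> (x \<otimes> y) = (\<psi> x + \<psi> y) mod m"
    and g_in: "g \<in> carrier G" and psi_g: "\<psi> g = 1"
    and m_even: "even m" and ordG: "order G = m * q" and q_odd: "odd q"
begin

lemma m_gt1: "1 < m" using psi_lt[OF g_in] psi_g m_even by (cases "m = 1") auto

lemma psi_one: "\<psi> \<one> = 0"
  using psi_mult[of \<one> \<one>] psi_lt[of \<one>] mod_dbl_zero by simp

lemma psi_pow: "\<psi> (g [^] (i::nat)) = i mod m"
proof (induction i)
  case 0 then show ?case using psi_one by simp
next
  case (Suc i)
  then show ?case using psi_mult[of "g [^] i" g] g_in psi_g by (simp add: mod_Suc_eq)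
qed

lemma psi_inv: assumes x: "x \<in> carrier G" and "\<psi> x = 0" shows "\<psi> (inv x) = 0"
  using psi_mult[of x "inv x"] assms psi_one psi_lt[of "inv x"] by simp

lemma psi_l0: "x \<in> carrier G \<Longrightarrow> \<psi> x = 0 \<Longrightarrow> y \<in> carrier G \<Longrightarrow> \<psi> (x \<otimes> y) = \<psi> y"
  using psi_mult psi_lt by simp

lemma psi_r0: "x \<in> carrier G \<Longrightarrow> \<psi> y = 0 \<Longrightarrow> y \<in> carrier G \<Longrightarrow> \<psi> (x \<otimes> y) = \<psi> x"
  using psi_mult psi_lt by simp

definition N where "N = {x \<in> carrier G. \<psi> x = 0}"
definition F where "F i = {x \<in> carrier G. \<psi> x = i}"

lemma card_F: assumes i: "i < m" shows "card (F i) = card N"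
proof (rule antisym)
  have gi: "g [^] i \<in> carrier G" "g [^] (m - i) \<in> carrier G" using g_in by auto
  show "card (F i) \<le> card N"
  proof (rule card_inj_on_le[of "\<lambda>y. y \<otimes> g [^] (m - i)"])
    show "inj_on (\<lambda>y. y \<otimes> g [^] (m - i)) (F i)"
    proof (rule inj_onI)
      fix x y assume "x \<in> F i" "y \<in> F i" "x \<otimes> g [^] (m - i) = y \<otimes> g [^] (m - i)"
      then show "x = y" using gi right_cancel[of "g [^] (m - i)" x y] unfolding F_def by blast
    qed
    show "(\<lambda>y. y \<otimes> g [^] (m - i)) ` F i \<subseteq> N"
    proof
      fix z assume "z \<in> (\<lambda>y. y \<otimes> g [^] (m - i)) ` F i"
      then obtain y where y: "y \<in> carrier G" "\<psi> y = i" "z = y \<otimes> g [^] (m - i)" unfolding F_def by blast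
      have "\<psi> z = (i + (m - i) mod m) mod m" using y psi_mult[OF y(1) gi(2)] psi_pow[of "m - i"] by simp
      also have "\<dots> = 0" using i by (cases "i = 0") auto
      finally show "z \<in> N" unfolding N_def using y gi by simp
    qed
    show "finite N" unfolding N_def using finG by simp
  qed
  show "card N \<le> card (F i)"
  proof (rule card_inj_on_le[of "\<lambda>y. y \<otimes> g [^] i"])
    show "inj_on (\<lambda>y. y \<otimes> g [^] i) N"
    proof (rule inj_onI)
      fix x y assume "x \<in> N" "y \<in> N" "x \<otimes> g [^] i = y \<otimes> g [^] i"
      then show "x = y" using gi right_cancel[of "g [^] i" x y] unfolding N_def by blast
    qed
    show "(\<lambda>y. y \<otimes> g [^] i) ` N \<subseteq> F i"
    proof
      fix z assume "z \<in> (\<lambda>y. y \<otimes> g [^] i) ` N"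
      then obtain y where y: "y \<in> carrier G" "\<psi> y = 0" "z = y \<otimes> g [^] i" unfolding N_def by blast
      have "\<psi> z = i" using y psi_mult[OF y(1) gi(1)] psi_pow[of i] i by simp
      then show "z \<in> F i" unfolding F_def using y gi by simp
    qed
    show "finite (F i)" unfolding F_def using finG by simp
  qed
qed

lemma card_N: "card N = q"
proof -
  have "order G = (\<Sum>i<m. card (F i))"
  proof -
    have "card (carrier G) = (\<Sum>i<m. card {x \<in> carrier G. \<psi> x = i})"
      using card_fibers[of "carrier G" "{..<m}" \<psi>] finG psi_lt by auto
    then show ?thesis unfolding order_def F_def by simp
  qed
  also have "\<dots> = m * card N" using card_F by simp
  finally show ?thesis using ordG m_gt1 by simp
qed

lemma N_subgroup: "subgroup N G"
proof
  show "N \<subseteq> carrier G" unfolding N_def by auto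
  show "\<And>x y. x \<in> N \<Longrightarrow> y \<in> N \<Longrightarrow> x \<otimes> y \<in> N" unfolding N_def using psi_mult by auto
  show "\<one> \<in> N" unfolding N_def using psi_one by auto
  show "\<And>x. x \<in> N \<Longrightarrow> inv x \<in> N" unfolding N_def using psi_inv by auto
qed

lemma N_pow_q: assumes a: "a \<in> N" shows "a [^] q = \<one>"
proof -
  have grp: "group (subgroup_generated G N)" by (rule group_subgroup_generated)
  have cN: "carrier (subgroup_generated G N) = N" using N_subgroup by (rule subgroup.carrier_subgroup_generated_subgroup)
  have "a [^]\<^bsub>subgroup_generated G N\<^esub> order (subgroup_generated G N) = \<one>\<^bsub>subgroup_generated G N\<^esub>"
    using group.pow_order_eq_1[OF grp] a cN by simp
  then show ?thesis using card_N cN unfolding order_def by (simp add: pow_subgroup_generated)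
qed

lemma N_sq_inj: assumes a: "a \<in> N" and b: "b \<in> N" and e: "a \<otimes> a = b \<otimes> b" shows "a = b"
proof -
  obtain h where h: "q + 1 = 2 * h" using q_odd by (metis odd_Suc_div_two Suc_eq_plus1 mult_2 add.commute dvd_def oddE add_Suc_right)
  have ac: "a \<in> carrier G" "b \<in> carrier G" using a b unfolding N_def by auto
  have "a = a [^] q \<otimes> a" using N_pow_q[OF a] ac by simp
  also have "\<dots> = a [^] (q + 1)" using ac by (simp add: nat_pow_mult[symmetric])
  also have "\<dots> = (a [^] (2::nat)) [^] h" using ac h by (simp add: nat_pow_pow)
  also have "\<dots> = (a \<otimes> a) [^] h" using ac by (simp add: numeral_2_eq_2)
  also have "\<dots> = (b \<otimes> b) [^] h" using e by simp
  also have "\<dots> = (b [^] (2::nat)) [^] h" using ac by (simp add: numeral_2_eq_2)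
  also have "\<dots> = b [^] (q + 1)" using ac h by (simp add: nat_pow_pow)
  also have "\<dots> = b" using N_pow_q[OF b] ac by (simp add: nat_pow_mult[symmetric])
  finally show ?thesis .
qed

end


lemma sum_fib_const:
  assumes fin: "finite P" "finite A" and img: "h ` P \<subseteq> A" and fib: "\<forall>x\<in>A. card {c\<in>P. h c = x} = k"
  shows "(\<Sum>c\<in>P. f (h c)) = k * (\<Sum>x\<in>A. f x)"
proof -
  have "(\<Sum>c\<in>P. f (h c)) = (\<Sum>x\<in>A. \<Sum>c\<in>{c\<in>P. h c = x}. f (h c))"
    using sum.group[OF fin img, of "\<lambda>c. f (h c)"] by simp
  also have "\<dots> = (\<Sum>x\<in>A. \<Sum>c\<in>{c\<in>P. h c = x}. f x)" by (rule sum.cong) auto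
  also have "\<dots> = (\<Sum>x\<in>A. k * f x)" using fib by simp
  finally show ?thesis by (simp add: sum_distrib_left)
qed

lemma fibers_exact:
  assumes fin: "finite P" "finite B" and img: "h ` P \<subseteq> B" and tot: "card P = k * card B"
    and le: "\<forall>y\<in>B. card {e\<in>P. h e = y} \<le> k"
  shows "\<forall>y\<in>B. card {e\<in>P. h e = y} = k"
proof (rule ccontr)
  assume "\<not> ?thesis"
  then obtain y where y: "y \<in> B" "card {e\<in>P. h e = y} \<noteq> k" by blast
  have "card P = (\<Sum>y\<in>B. card {e\<in>P. h e = y})" using card_fibers[OF fin img] .
  also have "\<dots> < (\<Sum>y\<in>B. k)"
  proof (rule sum_strict_mono_ex1)
    show "finite B" using fin by simp
    show "\<forall>x\<in>B. card {e \<in> P. h e = x} \<le> k" using le by blast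
    show "\<exists>a\<in>B. card {e \<in> P. h e = a} < k" using y le by (intro bexI[of _ y]) (auto simp: le_neq_implies_less)
  qed
  also have "\<dots> = k * card B" by simp
  finally show False using tot by simp
qed

lemma card_by_rows:
  assumes "P \<subseteq> A \<times> A" "finite A" "\<forall>x\<in>A. card {c\<in>P. fst c = x} = k"
  shows "card P = k * card A"
proof -
  have fP: "finite P" using assms finite_subset by blast
  have im: "fst ` P \<subseteq> A" using assms(1) by auto
  have "card P = (\<Sum>x\<in>A. card {c\<in>P. fst c = x})" using card_fibers[OF fP assms(2) im] .
  then show ?thesis using assms(3) by simp
qed

context hl
begin

lemma sum_psi: "(\<Sum>x\<in>carrier G. \<psi> x) = q * (\<Sum>i<m. i)"
proof -
  have "(\<Sum>x\<in>carrier G. \<psi> x) = (\<Sum>i<m. \<Sum>x\<in>{x\<in>carrier G. \<psi> x = i}. \<psi> x)"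
  proof -
    have im: "\<psi> ` carrier G \<subseteq> {..<m}" using psi_lt by auto
    show ?thesis using sum.group[OF finG _ im, of \<psi>] by simp
  qed
  also have "\<dots> = (\<Sum>i<m. \<Sum>x\<in>F i. i)" unfolding F_def by (rule sum.cong) auto
  also have "\<dots> = (\<Sum>i<m. q * i)" using card_F card_N by (simp add: mult.commute)
  finally show ?thesis by (simp add: sum_distrib_left)
qed

lemma no_odd_plex: assumes P: "cayley_kplex G k P" and k: "odd k" shows False
proof -
  have PA: "P \<subseteq> carrier G \<times> carrier G" using P unfolding cayley_kplex_def cayley_cells_def by blast
  have fP: "finite P" using PA finG finite_subset by blast
  define S where "S = (\<Sum>x\<in>carrier G. \<psi> x)"
  have i1: "fst ` P \<subseteq> carrier G" "snd ` P \<subseteq> carrier G" "(\<lambda>c. fst c \<otimes> snd c) ` P \<subseteq> carrier G" using PA by auto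
  have r: "(\<Sum>c\<in>P. \<psi> (fst c)) = k * S" unfolding S_def
    using i1 sum_fib_const[OF fP finG, of fst k \<psi>] PA P unfolding cayley_kplex_def by auto
  have c: "(\<Sum>c\<in>P. \<psi> (snd c)) = k * S" unfolding S_def
    using i1 sum_fib_const[OF fP finG, of snd k \<psi>] PA P unfolding cayley_kplex_def by auto
  have s: "(\<Sum>c\<in>P. \<psi> (fst c \<otimes> snd c)) = k * S" unfolding S_def
    using i1 sum_fib_const[OF fP finG, of "\<lambda>c. fst c \<otimes> snd c" k \<psi>] PA P unfolding cayley_kplex_def by auto
  have "(\<Sum>c\<in>P. \<psi> (fst c \<otimes> snd c)) mod m = (\<Sum>c\<in>P. (\<psi> (fst c) + \<psi> (snd c)) mod m) mod m"
    using PA by (intro arg_cong[where f="\<lambda>z. z mod m"] sum.cong) (auto simp: psi_mult)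
  also have "\<dots> = (\<Sum>c\<in>P. \<psi> (fst c) + \<psi> (snd c)) mod m" by (simp add: mod_sum_eq)
  also have "\<dots> = (k * S + k * S) mod m" using r c by (simp add: sum.distrib)
  finally have e: "(k * S) mod m = (k * S + k * S) mod m" using s by simp
  have "(k * S mod m + k * S mod m) mod m = k * S mod m" using e mod_add_eq[of "k * S" m "k * S"] by simp
  then have "k * S mod m = 0" using mod_dbl_zero[of "k * S mod m" m] m_gt1 by simp
  then have d: "m dvd k * S" by (simp add: dvd_eq_mod_eq_0)
  obtain h where h: "m = 2 * h" using m_even by blast
  have "2 * (\<Sum>i<m. i) = m * (m - 1)" by (rule sum_lessThan_double)
  then have "(\<Sum>i<m. i) = h * (m - 1)" using h by simp
  then have "2 * h dvd h * (k * q * (m - 1))" using d h unfolding S_def sum_psi by (simp add: ac_simps)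
  then have "2 dvd k * q * (m - 1)" using h m_gt1 by simp
  moreover have "odd (m - 1)" using m_even m_gt1 by simp
  ultimately show False using k q_odd by simp
qed

end


lemma arith1: "(i::nat) < m \<Longrightarrow> a < m \<Longrightarrow> (i + a) mod m = i \<Longrightarrow> a = 0"
proof (cases "i + a < m")
  case True
  assume "(i + a) mod m = i" then show ?thesis using True by simp
next
  case False
  assume h: "i < m" "a < m" "(i + a) mod m = i"
  have "(i + a) mod m = (i + a - m) mod m" using False by (simp add: le_mod_geq)
  also have "\<dots> = i + a - m" using h by simp
  finally show ?thesis using h by simp
qed

lemma mod_suc_neq: "1 < (m::nat) \<Longrightarrow> n mod m \<noteq> Suc n mod m"
proof
  assume m: "1 < m" and e: "n mod m = Suc n mod m"
  have "Suc n mod m = (if Suc (n mod m) = m then 0 else Suc (n mod m))" by (rule mod_Suc)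
  then show False using e m by (auto split: if_splits)
qed

lemma half_eq: assumes "(i::nat) < m" "i' < m" "even m" "(i + i) mod m = (i' + i') mod m"
  "(i < m div 2) = (i' < m div 2)" shows "i = i'"
proof (cases "i < m div 2")
  case True
  then have "i + i < m" "i' + i' < m" using assms by auto
  then show ?thesis using assms by simp
next
  case False
  then have a: "m \<le> i + i" "m \<le> i' + i'" "i + i - m < m" "i' + i' - m < m" using assms by auto
  have "(i + i) mod m = i + i - m" using a by (simp add: le_mod_geq)
  moreover have "(i' + i') mod m = i' + i' - m" using a by (simp add: le_mod_geq)
  ultimately show ?thesis using assms a by simp
qed

context hl
begin

lemma lcancel: "x \<in> carrier G \<Longrightarrow> y \<in> carrier G \<Longrightarrow> z \<in> carrier G \<Longrightarrow> x \<otimes> y = x \<otimes> z \<Longrightarrow> y = z"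
  by (metis inv_closed l_inv l_one m_assoc)

definition A where "A x = inv (g [^] \<psi> x) \<otimes> x"
definition Y where "Y c d x \<delta> = A x \<otimes> c \<otimes> g [^] (\<psi> x + 2 * d + \<delta>)"
definition Part where "Part c d = (\<lambda>(x, \<delta>). (x, Y c d x \<delta>)) ` (carrier G \<times> {0, 1::nat})"

lemma A_carrier: "x \<in> carrier G \<Longrightarrow> A x \<in> carrier G"
  unfolding A_def using g_in by simp

lemma x_eq: "x \<in> carrier G \<Longrightarrow> x = g [^] \<psi> x \<otimes> A x"
  unfolding A_def using g_in by (simp add: m_assoc[symmetric])

lemma x_prod: "x \<in> carrier G \<Longrightarrow> z \<in> carrier G \<Longrightarrow> x \<otimes> z = g [^] \<psi> x \<otimes> (A x \<otimes> z)"
  unfolding A_def using g_in by (simp add: m_assoc[symmetric])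

lemma A_N: assumes x: "x \<in> carrier G" shows "A x \<in> N"
proof -
  have "\<psi> x = (\<psi> (g [^] \<psi> x) + \<psi> (A x)) mod m" using x_eq[OF x] psi_mult[OF _ A_carrier[OF x]] g_in by (metis nat_pow_closed)
  then have "(\<psi> x + \<psi> (A x)) mod m = \<psi> x" using psi_pow psi_lt[OF x] by simp
  then have "\<psi> (A x) = 0" using arith1 psi_lt[OF x] psi_lt[OF A_carrier[OF x]] by blast
  then show ?thesis unfolding N_def using A_carrier[OF x] by simp
qed

lemma N_carrier: "c \<in> N \<Longrightarrow> c \<in> carrier G" unfolding N_def by simp
lemma N_psi: "c \<in> N \<Longrightarrow> \<psi> c = 0" unfolding N_def by simp

lemma Y_carrier: "c \<in> N \<Longrightarrow> x \<in> carrier G \<Longrightarrow> Y c d x \<delta> \<in> carrier G"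
  unfolding Y_def using A_carrier N_carrier g_in by simp

lemma psi_Y: assumes c: "c \<in> N" and x: "x \<in> carrier G"
  shows "\<psi> (Y c d x \<delta>) = (\<psi> x + 2 * d + \<delta>) mod m"
proof -
  have a: "A x \<in> carrier G" "\<psi> (A x) = 0" using A_N[OF x] N_carrier N_psi by auto
  have "\<psi> (A x \<otimes> c) = 0" using psi_l0[OF a(1) a(2) N_carrier[OF c]] N_psi[OF c] by simp
  then have "\<psi> (A x \<otimes> c \<otimes> g [^] (\<psi> x + 2 * d + \<delta>)) = \<psi> (g [^] (\<psi> x + 2 * d + \<delta>))"
    using psi_l0 a N_carrier[OF c] g_in by simp
  then show ?thesis unfolding Y_def using psi_pow by simp
qed

lemma Y_cancel: assumes c: "c \<in> N" "c' \<in> N" and x: "x \<in> carrier G" "x' \<in> carrier G"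
  and e: "A x \<otimes> c \<otimes> g [^] (j::nat) = A x' \<otimes> c' \<otimes> g [^] j"
  shows "A x \<otimes> c = A x' \<otimes> c'"
proof -
  have gj: "g [^] j \<in> carrier G" using g_in by simp
  have "A x \<otimes> c \<in> carrier G" "A x' \<otimes> c' \<in> carrier G" using A_carrier x N_carrier c by auto
  then show ?thesis using e right_cancel[OF gj] by blast
qed

lemma Part_sub: "c \<in> N \<Longrightarrow> Part c d \<subseteq> carrier G \<times> carrier G"
  unfolding Part_def using Y_carrier by auto

lemma Y01: assumes c: "c \<in> N" and x: "x \<in> carrier G" shows "Y c d x 0 \<noteq> Y c d x 1"
proof
  assume "Y c d x 0 = Y c d x 1"
  then have "\<psi> (Y c d x 0) = \<psi> (Y c d x 1)" by simp
  then have "(\<psi> x + 2 * d) mod m = Suc (\<psi> x + 2 * d) mod m" using psi_Y[OF c x] by simp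
  then show False using mod_suc_neq m_gt1 by blast
qed

lemma row: assumes c: "c \<in> N" and x: "x \<in> carrier G"
  shows "card {e \<in> Part c d. fst e = x} = 2"
proof -
  have "{e \<in> Part c d. fst e = x} = {(x, Y c d x 0), (x, Y c d x 1)}"
    unfolding Part_def using x by auto
  then show ?thesis using Y01[OF c x] by simp
qed

lemma card_Part: "c \<in> N \<Longrightarrow> card (Part c d) = 2 * order G"
  using card_by_rows[OF Part_sub finG] row unfolding order_def by blast

lemma Part_elem: "e \<in> Part c d \<Longrightarrow> \<exists>x \<delta>. x \<in> carrier G \<and> (\<delta> = 0 \<or> \<delta> = 1) \<and> e = (x, Y c d x \<delta>)"
  unfolding Part_def by auto

lemma col_le: assumes c: "c \<in> N" shows "card {e \<in> Part c d. snd e = y} \<le> 2"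
proof -
  define \<mu> where "\<mu> e = (if snd e = Y c d (fst e) 0 then 0 else 1::nat)" for e :: "'a \<times> 'a"
  have "card {e \<in> Part c d. snd e = y} \<le> card {0, 1::nat}"
  proof (rule card_inj_on_le[of \<mu>])
    show "\<mu> ` {e \<in> Part c d. snd e = y} \<subseteq> {0, 1}" unfolding \<mu>_def by auto
    show "finite {0, 1::nat}" by simp
    show "inj_on \<mu> {e \<in> Part c d. snd e = y}"
    proof (rule inj_onI)
      fix e e' assume e: "e \<in> {e \<in> Part c d. snd e = y}" and e': "e' \<in> {e \<in> Part c d. snd e = y}" and mu: "\<mu> e = \<mu> e'"
      obtain x \<delta> where xd: "x \<in> carrier G" "\<delta> = 0 \<or> \<delta> = 1" "e = (x, Y c d x \<delta>)" using e Part_elem by blast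
      obtain x' \<delta>' where xd': "x' \<in> carrier G" "\<delta>' = 0 \<or> \<delta>' = 1" "e' = (x', Y c d x' \<delta>')" using e' Part_elem by blast
      have m1: "\<mu> e = \<delta>" using xd Y01[OF c xd(1)] Y01[OF c xd(1), THEN not_sym] unfolding \<mu>_def by auto
      have m2: "\<mu> e' = \<delta>'" using xd' Y01[OF c xd'(1)] Y01[OF c xd'(1), THEN not_sym] unfolding \<mu>_def by auto
      have dd: "\<delta> = \<delta>'" using m1 m2 mu by simp
      have yy: "Y c d x \<delta> = Y c d x' \<delta>" using e e' xd xd' dd by simp
      then have "\<psi> (Y c d x \<delta>) = \<psi> (Y c d x' \<delta>)" by simp
      then have "(\<psi> x + (2 * d + \<delta>)) mod m = (\<psi> x' + (2 * d + \<delta>)) mod m" using psi_Y[OF c xd(1)] psi_Y[OF c xd'(1)] by (simp add: add.assoc)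
      then have "\<psi> x mod m = \<psi> x' mod m" by (rule mod_add_cancel_nat)
      then have pp: "\<psi> x = \<psi> x'" using psi_lt xd(1) xd'(1) by simp
      then have "A x \<otimes> c = A x' \<otimes> c" using yy Y_cancel[OF c c xd(1) xd'(1)] unfolding Y_def by simp
      then have "A x = A x'" using right_cancel A_carrier xd(1) xd'(1) N_carrier[OF c] by simp
      then have "x = x'" using x_eq xd(1) xd'(1) pp by metis
      then show "e = e'" using xd xd' dd by simp
    qed
  qed
  then show ?thesis by simp
qed

lemma psi_sym: assumes c: "c \<in> N" and x: "x \<in> carrier G"
  shows "\<psi> (x \<otimes> Y c d x \<delta>) = (\<psi> x + \<psi> x + (2 * d + \<delta>)) mod m"
  using psi_mult[OF x Y_carrier[OF c x]] psi_Y[OF c x] by (simp add: mod_add_right_eq add.assoc)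

lemma sym_le: assumes c: "c \<in> N" shows "card {e \<in> Part c d. fst e \<otimes> snd e = s} \<le> 2"
proof -
  define \<nu> where "\<nu> e = (if \<psi> (fst e) < m div 2 then 0 else 1::nat)" for e :: "'a \<times> 'a"
  have "card {e \<in> Part c d. fst e \<otimes> snd e = s} \<le> card {0, 1::nat}"
  proof (rule card_inj_on_le[of \<nu>])
    show "\<nu> ` {e \<in> Part c d. fst e \<otimes> snd e = s} \<subseteq> {0, 1}" unfolding \<nu>_def by auto
    show "finite {0, 1::nat}" by simp
    show "inj_on \<nu> {e \<in> Part c d. fst e \<otimes> snd e = s}"
    proof (rule inj_onI)
      fix e e' assume e: "e \<in> {e \<in> Part c d. fst e \<otimes> snd e = s}" and e': "e' \<in> {e \<in> Part c d. fst e \<otimes> snd e = s}" and nu: "\<nu> e = \<nu> e'"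
      obtain x \<delta> where xd: "x \<in> carrier G" "\<delta> = 0 \<or> \<delta> = 1" "e = (x, Y c d x \<delta>)" using e Part_elem by blast
      obtain x' \<delta>' where xd': "x' \<in> carrier G" "\<delta>' = 0 \<or> \<delta>' = 1" "e' = (x', Y c d x' \<delta>')" using e' Part_elem by blast
      have ss: "x \<otimes> Y c d x \<delta> = x' \<otimes> Y c d x' \<delta>'" using e e' xd xd' by simp
      have ps: "(\<psi> x + \<psi> x + (2 * d + \<delta>)) mod m = (\<psi> x' + \<psi> x' + (2 * d + \<delta>')) mod m"
        using psi_sym[OF c xd(1)] psi_sym[OF c xd'(1)] ss by metis
      have par: "\<And>z. even (z mod m) = even z" using m_even by (metis dvd_mod_iff)
      have "even \<delta> = even \<delta>'" using par[of "\<psi> x + \<psi> x + (2 * d + \<delta>)"] par[of "\<psi> x' + \<psi> x' + (2 * d + \<delta>')"] ps by simp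
      then have dd: "\<delta> = \<delta>'" using xd(2) xd'(2) by auto
      have "(\<psi> x + \<psi> x) mod m = (\<psi> x' + \<psi> x') mod m" using mod_add_cancel_nat[of "\<psi> x + \<psi> x" "2 * d + \<delta>" m "\<psi> x' + \<psi> x'"] ps dd by simp
      moreover have "(\<psi> x < m div 2) = (\<psi> x' < m div 2)" using nu xd(3) xd'(3) unfolding \<nu>_def by (simp split: if_splits)
      ultimately have pp: "\<psi> x = \<psi> x'" using half_eq psi_lt xd(1) xd'(1) m_even by blast
      have ac: "A x \<in> carrier G" "A x' \<in> carrier G" using A_carrier xd(1) xd'(1) by auto
      have cg: "c \<otimes> g [^] (\<psi> x + 2 * d + \<delta>) \<in> carrier G" using N_carrier[OF c] g_in by simp
      have "g [^] \<psi> x \<otimes> (A x \<otimes> A x) \<otimes> (c \<otimes> g [^] (\<psi> x + 2 * d + \<delta>)) = x \<otimes> Y c d x \<delta>"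
        unfolding Y_def using x_prod[OF xd(1)] ac N_carrier[OF c] g_in by (simp add: m_assoc)
      also have "\<dots> = x' \<otimes> Y c d x' \<delta>'" by (rule ss)
      also have "\<dots> = g [^] \<psi> x \<otimes> (A x' \<otimes> A x') \<otimes> (c \<otimes> g [^] (\<psi> x + 2 * d + \<delta>))"
        unfolding Y_def using x_prod[OF xd'(1)] ac N_carrier[OF c] g_in pp dd by (simp add: m_assoc)
      finally have "A x \<otimes> A x = A x' \<otimes> A x'"
        using right_cancel cg lcancel[of "g [^] \<psi> x" "A x \<otimes> A x" "A x' \<otimes> A x'"] ac g_in by simp
      then have "A x = A x'" using N_sq_inj A_N xd(1) xd'(1) by blast
      then have "x = x'" using x_eq xd(1) xd'(1) pp by metis
      then show "e = e'" using xd xd' dd by simp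
    qed
  qed
  then show ?thesis by simp
qed

lemma Part_plex: assumes c: "c \<in> N" shows "cayley_kplex G 2 (Part c d)"
proof -
  have fP: "finite (Part c d)" using Part_sub[OF c] finG finite_subset by blast
  have tot: "card (Part c d) = 2 * card (carrier G)" using card_Part[OF c] unfolding order_def .
  have cols: "\<forall>y\<in>carrier G. card {e \<in> Part c d. snd e = y} = 2"
  proof (rule fibers_exact[OF fP finG _ tot])
    show "snd ` Part c d \<subseteq> carrier G" using Part_sub[OF c, of d] by auto
    show "\<forall>y\<in>carrier G. card {e \<in> Part c d. snd e = y} \<le> 2" using col_le[OF c] by blast
  qed
  have syms: "\<forall>y\<in>carrier G. card {e \<in> Part c d. fst e \<otimes> snd e = y} = 2"
  proof (rule fibers_exact[OF fP finG _ tot])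
    show "(\<lambda>e. fst e \<otimes> snd e) ` Part c d \<subseteq> carrier G" using Part_sub[OF c, of d] by auto
    show "\<forall>y\<in>carrier G. card {e \<in> Part c d. fst e \<otimes> snd e = y} \<le> 2" using sym_le[OF c] by blast
  qed
  show ?thesis unfolding cayley_kplex_def cayley_cells_def
    using Part_sub[OF c] card_Part[OF c] row[OF c] cols syms by blast
qed

end


lemma fib_union:
  assumes "finite Q" "\<forall>P\<in>Q. finite P" "\<forall>P\<in>Q. \<forall>P'\<in>Q. P \<noteq> P' \<longrightarrow> P \<inter> P' = {}"
  shows "card {c \<in> \<Union>Q. h c = x} = (\<Sum>P\<in>Q. card {c \<in> P. h c = x})"
proof -
  have "{c \<in> \<Union>Q. h c = x} = (\<Union>P\<in>Q. {c \<in> P. h c = x})" by auto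
  moreover have "card (\<Union>P\<in>Q. {c \<in> P. h c = x}) = (\<Sum>P\<in>Q. card {c \<in> P. h c = x})"
  proof (rule card_UN_disjoint)
    show "finite Q" using assms(1) .
    show "\<forall>P\<in>Q. finite {c \<in> P. h c = x}" using assms(2) by simp
    show "\<forall>P\<in>Q. \<forall>P'\<in>Q. P \<noteq> P' \<longrightarrow> {c \<in> P. h c = x} \<inter> {c \<in> P'. h c = x} = {}"
      using assms(3) by blast
  qed
  ultimately show ?thesis by simp
qed

lemma union_plex:
  assumes finG: "finite (carrier G)" and fQ: "finite Q" and pl: "\<forall>P\<in>Q. cayley_kplex G 2 P"
    and dj: "\<forall>P\<in>Q. \<forall>P'\<in>Q. P \<noteq> P' \<longrightarrow> P \<inter> P' = {}"
  shows "cayley_kplex G (2 * card Q) (\<Union>Q)"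
proof -
  have sub: "\<forall>P\<in>Q. P \<subseteq> carrier G \<times> carrier G" using pl unfolding cayley_kplex_def cayley_cells_def by blast
  have fin: "\<forall>P\<in>Q. finite P" using sub finG finite_subset by (metis finite_SigmaI)
  have U: "\<Union>Q \<subseteq> carrier G \<times> carrier G" using sub by blast
  have r: "\<forall>x\<in>carrier G. card {c \<in> \<Union>Q. fst c = x} = 2 * card Q"
    using fib_union[OF fQ fin dj, of fst] pl unfolding cayley_kplex_def by simp
  have c: "\<forall>x\<in>carrier G. card {c \<in> \<Union>Q. snd c = x} = 2 * card Q"
    using fib_union[OF fQ fin dj, of snd] pl unfolding cayley_kplex_def by simp
  have s: "\<forall>x\<in>carrier G. card {c \<in> \<Union>Q. fst c \<otimes>\<^bsub>G\<^esub> snd c = x} = 2 * card Q"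
    using fib_union[OF fQ fin dj, of "\<lambda>c. fst c \<otimes>\<^bsub>G\<^esub> snd c"] pl unfolding cayley_kplex_def by simp
  have "card (\<Union>Q) = 2 * card Q * order G" using card_by_rows[OF U finG r] unfolding order_def .
  then show ?thesis unfolding cayley_kplex_def cayley_cells_def using U r c s by blast
qed

lemma even_plex:
  assumes finG: "finite (carrier G)" and ne: "carrier G \<noteq> {}" and Q: "cayley_2partition G Q"
    and k: "even k" "k \<le> order G"
  shows "\<exists>P. cayley_kplex G k P"
proof -
  have pl: "\<forall>P\<in>Q. cayley_kplex G 2 P" and dj: "\<forall>P\<in>Q. \<forall>P'\<in>Q. P \<noteq> P' \<longrightarrow> P \<inter> P' = {}"
    and un: "\<Union>Q = cayley_cells G" using Q unfolding cayley_2partition_def by auto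
  have fc: "finite (cayley_cells G)" unfolding cayley_cells_def using finG by simp
  have fQ: "finite Q" using un fc by (metis finite_UnionD)
  have "card (\<Union>Q) = sum card Q"
    using dj un fc by (intro card_Union_disjoint) (auto simp: pairwise_def disjnt_def intro: finite_subset)
  also have "\<dots> = (\<Sum>P\<in>Q. 2 * order G)" using pl unfolding cayley_kplex_def by simp
  finally have "order G * order G = card Q * (2 * order G)" using un unfolding cayley_cells_def order_def
    by (simp add: card_cartesian_product)
  moreover have "0 < order G" using finG ne unfolding order_def by (simp add: card_gt_0_iff)
  ultimately have oq: "order G = 2 * card Q" by simp
  obtain j where j: "k = 2 * j" using k by blast
  have "j \<le> card Q" using j k oq by simp
  then obtain Q' where Q': "Q' \<subseteq> Q" "card Q' = j" "finite Q'" using obtain_subset_with_card_n by metis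
  have "cayley_kplex G (2 * card Q') (\<Union>Q')"
    using union_plex[OF finG Q'(3)] pl dj Q'(1) by (meson subsetD)
  then show ?thesis using j Q'(2) by blast
qed

context hl
begin

lemma Part_disj: assumes c: "c \<in> N" "c' \<in> N" and d: "d < m div 2" "d' < m div 2"
  and e: "e \<in> Part c d" "e \<in> Part c' d'" shows "c = c' \<and> d = d'"
proof -
  obtain x \<delta> where xd: "x \<in> carrier G" "\<delta> = 0 \<or> \<delta> = 1" "e = (x, Y c d x \<delta>)" using e(1) Part_elem by blast
  obtain x' \<delta>' where xd': "x' \<in> carrier G" "\<delta>' = 0 \<or> \<delta>' = 1" "e' = (x', Y c' d' x' \<delta>')" if "e' = e" for e'
    using e(2) Part_elem by blast
  have xx: "x' = x" and yy: "Y c d x \<delta> = Y c' d' x \<delta>'" using xd xd'[OF refl] by auto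
  have "\<psi> (Y c d x \<delta>) = \<psi> (Y c' d' x \<delta>')" using yy by simp
  then have "(2 * d + \<delta> + \<psi> x) mod m = (2 * d' + \<delta>' + \<psi> x) mod m"
    using psi_Y[OF c(1) xd(1)] psi_Y[OF c(2) xd(1)] by (simp add: ac_simps)
  then have "(2 * d + \<delta>) mod m = (2 * d' + \<delta>') mod m" by (rule mod_add_cancel_nat)
  moreover have "2 * d + \<delta> < m" "2 * d' + \<delta>' < m" using d xd(2) xd'[OF refl] m_even by auto
  ultimately have E: "2 * d + \<delta> = 2 * d' + \<delta>'" by simp
  have d2: "\<delta>' = 0 \<or> \<delta>' = 1" using xd'[OF refl] by blast
  have dd: "d = d'" "\<delta> = \<delta>'" using E xd(2) d2 by presburger+
  have "A x \<otimes> c = A x \<otimes> c'" using yy dd Y_cancel[OF c xd(1) xd(1)] unfolding Y_def by simp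
  then have "c = c'" using lcancel A_carrier xd(1) N_carrier c by blast
  then show ?thesis using dd by simp
qed

definition Qp where "Qp = (\<lambda>(c, d). Part c d) ` (N \<times> {..<m div 2})"

lemma Qp_partition: "cayley_2partition G Qp"
proof -
  have pl: "\<forall>P\<in>Qp. cayley_kplex G 2 P" unfolding Qp_def using Part_plex by auto
  have dj: "\<forall>P\<in>Qp. \<forall>P'\<in>Qp. P \<noteq> P' \<longrightarrow> P \<inter> P' = {}"
  proof (intro ballI impI)
    fix P P' assume P: "P \<in> Qp" and P': "P' \<in> Qp" and ne: "P \<noteq> P'"
    obtain c d where cd: "c \<in> N" "d < m div 2" "P = Part c d" using P unfolding Qp_def by auto
    obtain c' d' where cd': "c' \<in> N" "d' < m div 2" "P' = Part c' d'" using P' unfolding Qp_def by auto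
    show "P \<inter> P' = {}"
    proof (rule ccontr)
      assume "P \<inter> P' \<noteq> {}"
      then obtain e where "e \<in> Part c d" "e \<in> Part c' d'" using cd cd' by blast
      then have "c = c' \<and> d = d'" using Part_disj cd cd' by blast
      then show False using ne cd cd' by simp
    qed
  qed
  have inj: "inj_on (\<lambda>(c, d). Part c d) (N \<times> {..<m div 2})"
  proof (rule inj_onI)
    fix a b assume a: "a \<in> N \<times> {..<m div 2}" and b: "b \<in> N \<times> {..<m div 2}"
      and eq: "(\<lambda>(c, d). Part c d) a = (\<lambda>(c, d). Part c d) b"
    obtain c d where cd: "a = (c, d)" "c \<in> N" "d < m div 2" using a by auto
    obtain c' d' where cd': "b = (c', d')" "c' \<in> N" "d' < m div 2" using b by auto
    have "(\<one>, Y c d \<one> 0) \<in> Part c d" unfolding Part_def by force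
    then have "(\<one>, Y c d \<one> 0) \<in> Part c' d'" using eq cd cd' by simp
    then have "c = c' \<and> d = d'" using Part_disj cd cd' \<open>(\<one>, Y c d \<one> 0) \<in> Part c d\<close> by blast
    then show "a = b" using cd cd' by simp
  qed
  have fN: "finite N" unfolding N_def using finG by simp
  have cQ: "card Qp = q * (m div 2)" unfolding Qp_def using card_image[OF inj] card_N fN
    by (simp add: card_cartesian_product)
  have fc: "finite (cayley_cells G)" unfolding cayley_cells_def using finG by simp
  have U: "\<Union>Qp \<subseteq> cayley_cells G" using pl unfolding cayley_kplex_def by blast
  have fP: "\<And>P. P \<in> Qp \<Longrightarrow> finite P" using U fc by (meson Sup_upper finite_subset subset_trans)
  have "card (\<Union>Qp) = sum card Qp"
    using dj fP by (intro card_Union_disjoint) (auto simp: pairwise_def disjnt_def)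
  also have "\<dots> = (\<Sum>P\<in>Qp. 2 * order G)" using pl unfolding cayley_kplex_def by simp
  also have "\<dots> = q * (m div 2) * (2 * order G)" using cQ by simp
  also have "\<dots> = order G * order G" using ordG m_even by (simp add: ac_simps)
  also have "\<dots> = card (cayley_cells G)" unfolding cayley_cells_def order_def by (simp add: card_cartesian_product)
  finally have "\<Union>Qp = cayley_cells G" using U fc by (simp add: card_subset_eq)
  then show ?thesis unfolding cayley_2partition_def using pl dj by blast
qed

end


theorem theorem5p2:
  fixes G :: "('a, 'b) monoid_scheme" and n :: nat
  assumes "group G"
    and "finite (carrier G)"
    and "order G = n"
    and "\<forall>P. sylow_subgroup G 2 P \<longrightarrow> card P > 1 \<and> cyclic_group (subgroup_generated G P)"
  shows "(\<forall>k. odd k \<longrightarrow> \<not> (\<exists>P. cayley_kplex G k P))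
    \<and> (\<exists>Q. cayley_2partition G Q)
    \<and> (\<forall>k. even k \<and> k \<le> n \<longrightarrow> (\<exists>P. cayley_kplex G k P))"
proof -
  interpret G: group G by fact
  have finG: "finite (carrier G)" by fact
  have ne: "carrier G \<noteq> {}" using G.one_closed by blast
  have npos: "0 < n" using assms(3)[symmetric] finG ne unfolding order_def by (simp add: card_gt_0_iff)
  define a where "a = multiplicity (2::nat) n"
  define qq where "qq = n div 2 ^ a"
  have nq: "n = 2 ^ a * qq" "\<not> 2 dvd qq"
    unfolding qq_def a_def using multiplicity_dvd[of 2 n] multiplicity_decompose[of n 2] npos by auto
  obtain P where P: "subgroup P G" "card P = 2 ^ a" using sylow_thm[of 2 G a qq] assms nq by auto
  have syl: "sylow_subgroup G 2 P" unfolding sylow_subgroup_def using P assms(3) a_def by simp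
  have Pc: "card P > 1" "cyclic_group (subgroup_generated G P)" using assms(4) syl by auto
  have a1: "1 \<le> a" using Pc(1) P(2) by (cases a) auto
  interpret SG: group "subgroup_generated G P" by (rule G.group_subgroup_generated)
  have cSG: "carrier (subgroup_generated G P) = P" using P(1) by (rule subgroup.carrier_subgroup_generated_subgroup)
  obtain g where g: "g \<in> P" "P = range (\<lambda>k::int. g [^]\<^bsub>subgroup_generated G P\<^esub> k)"
    using SG.cyclic_group Pc(2) cSG by auto
  have gG: "g \<in> carrier G" using g(1) P(1) subgroup.subset by blast
  have "P = range (\<lambda>k::int. g [^]\<^bsub>G\<^esub> k)" using g G.int_pow_subgroup_generated[of g P] cSG by auto
  then have "generate G {g} = P" using G.generate_pow[OF gG] by auto
  then have ordg: "G.ord g = 2 ^ a" using G.generate_pow_card[OF gG] P(2) by simp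
  define m where "m = (2::nat) ^ a"
  interpret T: tr G g m using gG ordg finG unfolding m_def by unfold_locales auto
  have cT: "card T.T = qq" using T.card_T assms(3) nq unfolding m_def by simp
  have phig: "odd (T.phi g)" using T.phi_g_odd[of a] a1 cT nq unfolding m_def by simp
  have cop: "gcd (T.phi g) m = 1" using phig unfolding m_def by simp
  have "T.phi g \<noteq> 0" using phig by (intro notI) simp
  then obtain w y where wy: "T.phi g * w = m * y + 1" using bezout_nat[of "T.phi g" m] cop by auto
  have m1: "1 < m" unfolding m_def using a1 one_less_power[of "2::nat" a] by simp
  define \<psi> where "\<psi> x = (T.phi x * w) mod m" for x
  interpret H: hl G \<psi> g m qq
  proof
    show "finite (carrier G)" by fact
    show "\<And>x. x \<in> carrier G \<Longrightarrow> \<psi> x < m" unfolding \<psi>_def using m1 by simp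
    fix x y assume xy: "x \<in> carrier G" "y \<in> carrier G"
    have "\<psi> (x \<otimes>\<^bsub>G\<^esub> y) = ((T.phi x + T.phi y) mod m * w) mod m" unfolding \<psi>_def using T.phi_hom[OF xy] by simp
    also have "\<dots> = ((T.phi x + T.phi y) * w) mod m" by (rule mod_mult_left_eq)
    also have "\<dots> = (T.phi x * w + T.phi y * w) mod m" by (simp add: distrib_right)
    also have "\<dots> = (\<psi> x + \<psi> y) mod m" unfolding \<psi>_def by (rule mod_add_eq[symmetric])
    finally show "\<psi> (x \<otimes>\<^bsub>G\<^esub> y) = (\<psi> x + \<psi> y) mod m" .
  next
    show "g \<in> carrier G" by fact
    have "(1 + y * m) mod m = 1 mod m" by (rule mod_mult_self1)
    then show "\<psi> g = 1" unfolding \<psi>_def using wy m1 by (simp add: ac_simps)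
    show "even m" unfolding m_def using a1 by (cases a) auto
    show "order G = m * qq" using assms(3) nq unfolding m_def by simp
    show "odd qq" using nq by simp
  qed
  show ?thesis
  proof (intro conjI allI impI)
    fix k :: nat assume "odd k"
    then show "\<not> (\<exists>P. cayley_kplex G k P)" using H.no_odd_plex by blast
  next
    show "\<exists>Q. cayley_2partition G Q" using H.Qp_partition by blast
  next
    fix k :: nat assume k: "even k \<and> k \<le> n"
    show "\<exists>P. cayley_kplex G k P" using even_plex[OF finG _ H.Qp_partition] k assms(3) G.one_closed by blast
  qed
qed


end
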